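(* For all integers $n\geq 2$, \[g(n+1)<f(n)+\frac{1000}{\mu(n-1)^5}.\]
   Context: Let $\mu(m)=\pi\sqrt{m}$. For an integer $n\geq 2$ put $x=\mu(n-1)$, $y=\mu(n)$, $z=\mu(n+1)$, and define \[f(n)=e^{x-2y+z}\,\frac{y^{14}(x^5-x^4-1)(z^5-z^4-1)}{x^7z^7(y^5-y^4+1)^2},\qquad g(n)=e^{x-2y+z}\,\frac{y^{14}(x^5-x^4+1)(z^5-z^4+1)}{x^7z^7(y^5-y^4-1)^2}.\] Thus, with $w=\mu(n+2)$, $g(n+1)=e^{y-2z+w}\dfrac{z^{14}(y^5-y^4+1)(w^5-w^4+1)}{y^7w^7(z^5-z^4-1)^2}$. *)

theory Defs
  imports Complex_Main
begin

definition mu :: "real \<Rightarrow> real" where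
  "mu m = pi * sqrt m"

definition f_fun :: "nat \<Rightarrow> real" where
  "f_fun n = (let x = mu (real n - 1); y = mu (real n); z = mu (real n + 1) in
     exp (x - 2*y + z) * (y^14 * (x^5 - x^4 - 1) * (z^5 - z^4 - 1)) /
       (x^7 * z^7 * (y^5 - y^4 + 1)^2))"

definition g_fun :: "nat \<Rightarrow> real" where
  "g_fun n = (let x = mu (real n - 1); y = mu (real n); z = mu (real n + 1) in
     exp (x - 2*y + z) * (y^14 * (x^5 - x^4 + 1) * (z^5 - z^4 + 1)) /
       (x^7 * z^7 * (y^5 - y^4 - 1)^2))"

end

theory Submission imports Defs "HOL-Analysis.Complex_Transcendental" begin

lemma diff2:
  fixes F F1 F2 :: "real \<Rightarrow> real"
  assumes d1: "\<And>m. t \<le> m \<Longrightarrow> m \<le> t+2 \<Longrightarrow> (F has_real_derivative F1 m) (at m)"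
    and d2: "\<And>m. t \<le> m \<Longrightarrow> m \<le> t+2 \<Longrightarrow> (F1 has_real_derivative F2 m) (at m)"
  shows "\<exists>\<eta>. t < \<eta> \<and> \<eta> < t+2 \<and> F(t+2) - 2* F(t+1) + F t = F2 \<eta>"
proof -
  have "\<And>s. t \<le> s \<Longrightarrow> s \<le> t+1 \<Longrightarrow> ((\<lambda>s. F(s+1) - F s) has_real_derivative (F1 (s+1) - F1 s)) (at s)"
  proof -
    fix s assume "t \<le> s" "s \<le> t+1"
    have "((\<lambda>s. F(s+1)) has_real_derivative F1 (s+1)) (at s)"
      using d1[of "s+1"] \<open>t \<le> s\<close> \<open>s \<le> t+1\<close> DERIV_shift[of F "F1 (s+1)" s 1] by simp
    moreover have "(F has_real_derivative F1 s) (at s)" using d1 \<open>t \<le> s\<close> \<open>s \<le> t+1\<close> by simp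
    ultimately show "((\<lambda>s. F(s+1) - F s) has_real_derivative (F1 (s+1) - F1 s)) (at s)"
      by (intro derivative_intros)
  qed
  from MVT2[of t "t+1" "\<lambda>s. F(s+1) - F s", OF _ this]
  obtain \<xi> where x: "t < \<xi>" "\<xi> < t+1" "F(t+1+1) - F(t+1) - (F(t+1) - F t) = (t+1-t) * (F1 (\<xi>+1) - F1 \<xi>)"
    by auto
  have "\<And>s. \<xi> \<le> s \<Longrightarrow> s \<le> \<xi>+1 \<Longrightarrow> (F1 has_real_derivative F2 s) (at s)"
    using d2 x by simp
  from MVT2[of \<xi> "\<xi>+1" F1, OF _ this]
  obtain \<eta> where "\<xi> < \<eta>" "\<eta> < \<xi>+1" "F1(\<xi>+1) - F1 \<xi> = (\<xi>+1-\<xi>) * F2 \<eta>" by auto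
  with x show ?thesis by (intro exI[of _ \<eta>]) (auto simp: algebra_simps)
qed

lemma diff3:
  fixes F F1 F2 F3 :: "real \<Rightarrow> real"
  assumes d1: "\<And>m. t \<le> m \<Longrightarrow> m \<le> t+3 \<Longrightarrow> (F has_real_derivative F1 m) (at m)"
    and d2: "\<And>m. t \<le> m \<Longrightarrow> m \<le> t+3 \<Longrightarrow> (F1 has_real_derivative F2 m) (at m)"
    and d3: "\<And>m. t \<le> m \<Longrightarrow> m \<le> t+3 \<Longrightarrow> (F2 has_real_derivative F3 m) (at m)"
  shows "\<exists>\<eta>. t < \<eta> \<and> \<eta> < t+3 \<and> F(t+3) - 3* F(t+2) + 3* F(t+1) - F t = F3 \<eta>"
proof -
  have "\<And>s. t \<le> s \<Longrightarrow> s \<le> t+1 \<Longrightarrow> ((\<lambda>s. F(s+2) - 2* F(s+1) + F s) has_real_derivative (F1 (s+2) - 2* F1(s+1) + F1 s)) (at s)"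
  proof -
    fix s assume "t \<le> s" "s \<le> t+1"
    have "((\<lambda>s. F(s+2)) has_real_derivative F1 (s+2)) (at s)"
      using d1[of "s+2"] \<open>t \<le> s\<close> \<open>s \<le> t+1\<close> DERIV_shift[of F "F1 (s+2)" s 2] by simp
    moreover have "((\<lambda>s. F(s+1)) has_real_derivative F1 (s+1)) (at s)"
      using d1[of "s+1"] \<open>t \<le> s\<close> \<open>s \<le> t+1\<close> DERIV_shift[of F "F1 (s+1)" s 1] by simp
    then have "((\<lambda>s. 2* F(s+1)) has_real_derivative 2* F1 (s+1)) (at s)" by (rule DERIV_cmult)
    moreover have "(F has_real_derivative F1 s) (at s)" using d1 \<open>t \<le> s\<close> \<open>s \<le> t+1\<close> by simp
    ultimately show "((\<lambda>s. F(s+2) - 2* F(s+1) + F s) has_real_derivative (F1 (s+2) - 2* F1(s+1) + F1 s)) (at s)"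
      by (intro derivative_intros)
  qed
  from MVT2[of t "t+1" "\<lambda>s. F(s+2) - 2* F(s+1) + F s", OF _ this]
  obtain \<xi> where x: "t < \<xi>" "\<xi> < t+1"
    "F(t+1+2) - 2* F(t+1+1) + F(t+1) - (F(t+2) - 2* F(t+1) + F t) = (t+1-t) * (F1 (\<xi>+2) - 2* F1(\<xi>+1) + F1 \<xi>)"
    by auto
  have "\<exists>\<eta>. \<xi> < \<eta> \<and> \<eta> < \<xi>+2 \<and> F1(\<xi>+2) - 2* F1(\<xi>+1) + F1 \<xi> = F3 \<eta>"
    by (rule diff2[of \<xi> F1 F2 F3]) (use d2 d3 x in auto)
  then obtain \<eta> where "\<xi> < \<eta>" "\<eta> < \<xi>+2" "F1(\<xi>+2) - 2* F1(\<xi>+1) + F1 \<xi> = F3 \<eta>" by auto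
  with x show ?thesis by (intro exI[of _ \<eta>]) (auto simp: algebra_simps)
qed


lemma dinvpow:
  assumes "0 < m"
  shows "((\<lambda>m. 1 / sqrt m ^ k) has_real_derivative (- real k / (2 * sqrt m ^ (k+2)))) (at m)"
proof -
  have s: "sqrt m > 0" using assms by simp
  have "((\<lambda>m. 1 / sqrt m ^ k) has_real_derivative
     (- (real k * sqrt m ^ (k - 1) * (inverse (sqrt m) / 2)) / (sqrt m ^ k * sqrt m ^ k))) (at m)"
    using assms s by (auto intro!: derivative_eq_intros)
  moreover have "(- (real k * sqrt m ^ (k - 1) * (inverse (sqrt m) / 2)) / (sqrt m ^ k * sqrt m ^ k))
     = - real k / (2 * sqrt m ^ (k+2))"
  proof (cases k)
    case 0 then show ?thesis by simp
  next
    case (Suc j)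
    then show ?thesis using s by (simp add: field_simps power_add)
  qed
  ultimately show ?thesis by simp
qed

lemma dh1: "0 < m \<Longrightarrow> ((\<lambda>m. pi * sqrt m) has_real_derivative pi/(2* sqrt m)) (at m)"
  by (auto intro!: derivative_eq_intros simp: field_simps)

lemma deriv_eq: "(f has_real_derivative a) F \<Longrightarrow> a = b \<Longrightarrow> (f has_real_derivative b) F" by simp

lemma s3: "0 \<le> m \<Longrightarrow> sqrt m ^ 3 = sqrt m * m"
  by (simp add: power3_eq_cube)

definition "h1 m = pi/2 * (1 / sqrt m ^ 1)"
definition "h2 m = -pi/4 * (1 / sqrt m ^ 3)"
definition "h3 m = 3* pi/8 * (1 / sqrt m ^ 5)"

lemma dh1': "0 < m \<Longrightarrow> ((\<lambda>m. pi * sqrt m) has_real_derivative h1 m) (at m)"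
  by (rule deriv_eq[OF dh1]) (auto simp: h1_def)

lemma dh2: "0 < m \<Longrightarrow> (h1 has_real_derivative h2 m) (at m)"
  unfolding h1_def[abs_def] by (rule deriv_eq[OF DERIV_cmult[OF dinvpow]]) (auto simp: h2_def s3)

lemma dh3: "0 < m \<Longrightarrow> (h2 has_real_derivative h3 m) (at m)"
  unfolding h2_def[abs_def] by (rule deriv_eq[OF DERIV_cmult[OF dinvpow]]) (auto simp: h3_def)

definition "Gf m = 1 - (1/pi) * (1 / sqrt m ^ 1) - (1/pi)^5 * (1 / sqrt m ^ 5)"
definition "G1 m = (1/pi)/2 * (1 / sqrt m ^ 3) + 5*(1/pi)^5/2 * (1 / sqrt m ^ 7)"
definition "G2 m = -3*(1/pi)/4 * (1 / sqrt m ^ 5) - 35*(1/pi)^5/4 * (1 / sqrt m ^ 9)"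

lemma dG1: "0 < m \<Longrightarrow> (Gf has_real_derivative G1 m) (at m)"
  unfolding Gf_def[abs_def]
  by (rule deriv_eq[OF DERIV_diff[OF DERIV_diff[OF DERIV_const DERIV_cmult[OF dinvpow]] DERIV_cmult[OF dinvpow]]])
     (auto simp: G1_def s3)

lemma dG2: "0 < m \<Longrightarrow> (G1 has_real_derivative G2 m) (at m)"
  unfolding G1_def[abs_def]
  by (rule deriv_eq[OF DERIV_add[OF DERIV_cmult[OF dinvpow] DERIV_cmult[OF dinvpow]]])
     (auto simp: G2_def)

lemma invpow_mono: "0 < a \<Longrightarrow> a \<le> b \<Longrightarrow> 1 / sqrt b ^ k \<le> 1 / sqrt a ^ k"
  by (intro divide_left_mono power_mono mult_pos_pos) (auto simp: zero_less_power)

lemma invpow_mu: "0 < a \<Longrightarrow> 1 / sqrt a ^ k = (pi * (1 / mu a))^k"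
  by (simp add: mu_def power_divide)

lemma Gf_mu: "0 < m \<Longrightarrow> Gf m = 1 - 1/mu m - (1/mu m)^5"
  unfolding Gf_def by (simp add: mu_def power_divide power_mult_distrib)

lemma mu_ge: "1 \<le> m \<Longrightarrow> 3 \<le> mu m"
proof -
  assume "1 \<le> m"
  then have "1 \<le> sqrt m" by simp
  then have "3 * 1 \<le> pi * sqrt m" using pi_gt3 by (intro mult_mono) auto
  then show ?thesis by (simp add: mu_def)
qed

lemma mu_mono: "0 \<le> a \<Longrightarrow> a \<le> b \<Longrightarrow> mu a \<le> mu b"
  by (simp add: mu_def)

lemma Gf_pos: "1 \<le> m \<Longrightarrow> 0 < Gf m"
proof -
  assume m: "1 \<le> m"
  define v where "v = 1 / mu m"
  have v: "0 < v" "v \<le> 1/3" using mu_ge[OF m] unfolding v_def by (auto simp: field_simps)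
  have "v^5 \<le> v^1" by (rule power_decreasing) (use v in auto)
  moreover have "Gf m = 1 - v - v^5" using Gf_mu[of m] m unfolding v_def by simp
  ultimately show ?thesis using v by simp
qed

lemma dphi1: "1 \<le> m \<Longrightarrow> ((\<lambda>m. ln (Gf m)) has_real_derivative G1 m / Gf m) (at m)"
  by (rule deriv_eq[OF DERIV_chain2[OF DERIV_ln dG1]]) (use Gf_pos in \<open>auto simp: field_simps\<close>)

lemma dphi2: "1 \<le> m \<Longrightarrow> ((\<lambda>m. G1 m / Gf m) has_real_derivative (G2 m / Gf m - (G1 m / Gf m)^2)) (at m)"
proof -
  assume m: "1 \<le> m"
  have p: "Gf m > 0" using Gf_pos[OF m] .
  show ?thesis
    by (rule deriv_eq[OF DERIV_divide[OF dG2 dG1]]) (use m p in \<open>auto simp: field_simps power2_eq_square\<close>)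
qed

lemma G2_neg: "0 < m \<Longrightarrow> G2 m < 0"
proof -
  assume m: "0 < m"
  have "0 < 3*(1/pi)/4 * (1 / sqrt m ^ 5)" using m by simp
  moreover have "0 < 35*(1/pi)^5/4 * (1 / sqrt m ^ 9)" using m by simp
  ultimately show ?thesis unfolding G2_def by linarith
qed

lemma G1_pos: "0 < m \<Longrightarrow> 0 < G1 m"
  unfolding G1_def by (simp add: add_pos_pos)

lemma mono_facts:
  assumes "0 < a" "a \<le> b"
  shows "Gf a \<le> Gf b" "G1 b \<le> G1 a" "- G2 b \<le> - G2 a" "h3 b \<le> h3 a"
proof -
  note im = invpow_mono[OF assms]
  have k1: "(1/pi) * (1 / sqrt b ^ 1) \<le> (1/pi) * (1 / sqrt a ^ 1)" by (rule mult_left_mono[OF im]) simp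
  have k3: "(1/pi)/2 * (1 / sqrt b ^ 3) \<le> (1/pi)/2 * (1 / sqrt a ^ 3)" by (rule mult_left_mono[OF im]) simp
  have k5: "(1/pi)^5 * (1 / sqrt b ^ 5) \<le> (1/pi)^5 * (1 / sqrt a ^ 5)" by (rule mult_left_mono[OF im]) simp
  have k5': "3*(1/pi)/4 * (1 / sqrt b ^ 5) \<le> 3*(1/pi)/4 * (1 / sqrt a ^ 5)" by (rule mult_left_mono[OF im]) simp
  have k5'': "3*pi/8 * (1 / sqrt b ^ 5) \<le> 3*pi/8 * (1 / sqrt a ^ 5)" by (rule mult_left_mono[OF im]) simp
  have k7: "5*(1/pi)^5/2 * (1 / sqrt b ^ 7) \<le> 5*(1/pi)^5/2 * (1 / sqrt a ^ 7)" by (rule mult_left_mono[OF im]) simp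
  have k9: "35*(1/pi)^5/4 * (1 / sqrt b ^ 9) \<le> 35*(1/pi)^5/4 * (1 / sqrt a ^ 9)" by (rule mult_left_mono[OF im]) simp
  show "Gf a \<le> Gf b" unfolding Gf_def using k1 k5 by linarith
  show "G1 b \<le> G1 a" unfolding G1_def using k3 k7 by linarith
  show "- G2 b \<le> - G2 a" unfolding G2_def using k5' k9 by linarith
  show "h3 b \<le> h3 a" unfolding h3_def using k5'' by linarith
qed

lemma final_scalar:
  fixes t E1 d3 Ag Af P0 M1 P2 M3 v1 v3 C2 :: real
  assumes t: "0 < t" "t \<le> 1/4" and E: "0 < E1" "E1 \<le> 1"
    and d3: "d3 \<le> 362* t^5" and C2: "C2 \<le> 125* t^5"
    and P: "0 < P0" "P0 \<le> M1" "P0 \<le> P2" "P0 \<le> M3" "1 - t - t^5 \<le> P0"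
    and cc: "M1* M3 \<le> P2^2" "P0* P2 \<le> M1^2" "M1^2 \<le> P0* P2* exp C2"
    and v: "0 \<le> v1" "v1 \<le> t" "0 \<le> v3" "v3 \<le> t"
    and A: "0 < Ag" "Ag \<le> Af" "Af \<le> 9/8"
  shows "E1 * exp d3 * Ag * ((M1 + 2* v1^5)*(M3+2* v3^5)/P2^2) < E1* Af*(P0* P2/(M1+2* v1^5)^2) + 1000* t^5"
proof -
  define u where "u = t^5"
  have u0: "0 < u" using t by (simp add: u_def)
  have "t^5 \<le> (1/4)^5" by (rule power_mono) (use t in auto)
  then have u1: "u \<le> 1/1024" unfolding u_def by (simp add: power_divide)
  have P0b: "P0 \<ge> 2/3" using P(5) t u1 unfolding u_def by simp
  define q where "q = 1 + 2* u/P0"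
  have q1: "q \<ge> 1" unfolding q_def using u0 P by simp
  have M1p: "M1 > 0" "P2 > 0" "M3 > 0" using P by auto
  define N1 where "N1 = M1 + 2* v1^5"
  define N3 where "N3 = M3 + 2* v3^5"
  have v15: "v1^5 \<le> u" unfolding u_def using power_mono[OF v(2) v(1)] .
  have v35: "v3^5 \<le> u" unfolding u_def using power_mono[OF v(4) v(3)] .
  have N1b: "M1 \<le> N1" "N1 \<le> M1* q"
  proof -
    show "M1 \<le> N1" unfolding N1_def using v by simp
    have "2* v1^5 \<le> 2* u" using v15 by simp
    also have "\<dots> = P0 * (2* u/P0)" using P by simp
    also have "\<dots> \<le> M1 * (2* u/P0)" using P u0 by (intro mult_right_mono) auto
    finally show "N1 \<le> M1* q" unfolding N1_def q_def by (simp add: algebra_simps)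
  qed
  have N3b: "M3 \<le> N3" "N3 \<le> M3* q"
  proof -
    show "M3 \<le> N3" unfolding N3_def using v by simp
    have "2* v3^5 \<le> 2* u" using v35 by simp
    also have "\<dots> = P0 * (2* u/P0)" using P by simp
    also have "\<dots> \<le> M3 * (2* u/P0)" using P u0 by (intro mult_right_mono) auto
    finally show "N3 \<le> M3* q" unfolding N3_def q_def by (simp add: algebra_simps)
  qed
  have N1p: "N1 > 0" using N1b M1p by linarith
  have N3p: "N3 > 0" using N3b M1p by linarith
  have key: "N1^3* N3 \<le> P0* P2^3* exp C2 * q^4"
  proof -
    have "N1^3* N3 \<le> (M1* q)^3*(M3* q)"
      using N1b N3b N1p N3p by (intro mult_mono power_mono) auto
    also have "\<dots> = (M1^2) * (M1* M3) * q^4" by (simp add: power_numeral_reduce algebra_simps)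
    also have "\<dots> \<le> (P0* P2* exp C2) * (P2^2) * q^4"
      using cc M1p q1 P by (intro mult_mono mult_right_mono) auto
    finally show ?thesis by (simp add: power_numeral_reduce algebra_simps)
  qed
  define B where "B = P0* P2/N1^2"
  have B0: "0 < B" unfolding B_def using P M1p N1p by simp
  have B1: "B \<le> 1"
  proof -
    have "P0* P2 \<le> N1^2" using cc(2) N1b M1p power_mono[of M1 N1 2] by linarith
    then show ?thesis unfolding B_def using N1p by simp
  qed
  have step1: "N1* N3/P2^2 \<le> B * (exp C2 * q^4)"
  proof -
    have "N1* N3/P2^2 = (N1^3* N3)/(N1^2* P2^2)" using N1p by (simp add: power_numeral_reduce field_simps)
    also have "\<dots> \<le> (P0* P2^3* exp C2 * q^4)/(N1^2* P2^2)"
      using key N1p M1p by (intro divide_right_mono) auto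
    also have "\<dots> = B * (exp C2 * q^4)" unfolding B_def using M1p N1p
      by (simp add: power_numeral_reduce field_simps)
    finally show ?thesis .
  qed
  define Z where "Z = exp (487* u) * q^4"
  have Z1: "Z \<ge> 1"
  proof -
    have "1 \<le> exp (487* u)" using u0 by simp
    moreover have "1 \<le> q^4" using q1 by (simp add: one_le_power)
    ultimately have "1*1 \<le> exp (487* u) * q^4" by (intro mult_mono) auto
    then show ?thesis unfolding Z_def by simp
  qed
  have ZZ: "exp d3 * (exp C2 * q^4) \<le> Z"
  proof -
    have "exp d3 * exp C2 = exp (d3 + C2)" by (simp add: exp_add)
    also have "\<dots> \<le> exp (487* u)" using d3 C2 unfolding u_def by simp
    finally show ?thesis unfolding Z_def using q1
      by (metis mult.assoc mult_right_mono zero_le_power order_trans zero_le_one)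
  qed
  have Zb: "Z - 1 \<le> 742* u"
  proof -
    have e: "exp (487* u) \<le> 1 + 487* u + (487* u)^2"
      by (rule exp_bound) (use u0 u1 in auto)
    have "(487* u)^2 = (487*487* u)* u" by (simp add: power2_eq_square)
    also have "\<dots> \<le> (487*487* u)*(1/1024)" using u1 u0 by (intro mult_left_mono) auto
    finally have e2: "exp (487* u) \<le> 1 + 719* u" using e u0 by linarith
    have qq: "2* u/P0 \<le> 3* u" using P0b u0 by (simp add: field_simps)
    have q3: "q \<le> 1 + 3* u" unfolding q_def using qq by simp
    have "q^4 \<le> (1+3* u)^4" using q1 q3 by (intro power_mono) auto
    also have "(1+3* u)^4 = 1 + 12* u + 54*(u* u) + 108*(u* u* u) + 81*(u* u* u* u)"
      by (simp add: power_numeral_reduce algebra_simps)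
    also have "\<dots> \<le> 1 + 13* u"
    proof -
      have uu: "u* u \<le> (1/1024)* u" using u0 u1 by (intro mult_right_mono) auto
      have "(u* u)* u \<le> (u* u)*1" using u0 u1 by (intro mult_left_mono) auto
      then have uuu: "u* u* u \<le> u* u" by simp
      have "(u* u* u)* u \<le> (u* u* u)*1" using u0 u1 by (intro mult_left_mono) auto
      then have uuuu: "u* u* u* u \<le> u* u* u" by simp
      show ?thesis using uu uuu uuuu u0 by linarith
    qed
    finally have q4: "q^4 \<le> 1 + 13* u" by simp
    have "Z \<le> (1 + 719* u)*(1+13* u)" unfolding Z_def
      using e2 q4 u0 by (intro mult_mono) (auto simp: zero_le_power)
    also have "\<dots> = 1 + 732* u + 9347*(u* u)" by (simp add: algebra_simps)
    also have "\<dots> \<le> 1 + 732* u + 9347*((1/1024)* u)"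
      using u0 u1 by (intro add_left_mono mult_left_mono mult_right_mono) auto
    finally show ?thesis using u0 by linarith
  qed
  have "E1 * exp d3 * Ag * (N1* N3/P2^2) \<le> E1 * Ag * (B * Z)"
  proof -
    have "exp d3 * (N1* N3/P2^2) \<le> exp d3 * (B * (exp C2 * q^4))"
      using step1 by (intro mult_left_mono) auto
    also have "\<dots> = B * (exp d3 * (exp C2 * q^4))" by simp
    also have "\<dots> \<le> B * Z" using ZZ B0 by (intro mult_left_mono) auto
    finally have "exp d3 * (N1* N3/P2^2) \<le> B * Z" .
    then have "(E1* Ag) * (exp d3 * (N1* N3/P2^2)) \<le> (E1* Ag) * (B* Z)"
      using E A by (intro mult_left_mono) auto
    then show ?thesis by (simp add: algebra_simps)
  qed
  also have "\<dots> \<le> E1 * Af * (B * Z)"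
    using E A B0 Z1 by (intro mult_right_mono mult_left_mono) auto
  also have "\<dots> = E1* Af* B + (E1* B) * (Af*(Z-1))" by (simp add: algebra_simps)
  also have "\<dots> \<le> E1* Af* B + 1 * (Af*(Z-1))"
  proof -
    have "E1* B \<le> 1" using E B0 B1 by (metis mult_le_one less_imp_le)
    then show ?thesis using A Z1 by (intro add_left_mono mult_right_mono) auto
  qed
  also have "\<dots> < E1* Af* B + 1000* u"
  proof -
    have "Af*(Z-1) \<le> (9/8)*(742* u)" using A Z1 Zb by (intro mult_mono) auto
    then show ?thesis using u0 by simp
  qed
  finally show ?thesis unfolding B_def N1_def N3_def u_def .
qed


lemma C2_bound:
  fixes t p :: real
  assumes t: "0 < t" "t \<le> 1/4" and p: "3 < p" "p \<le> 3.1416"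
  shows "(3/4* p^4* t^5 + 35/4* p^4* t^9)/(1-t-t^5) + ((p^2/2* t^3 + 5* p^2/2* t^7)/(1-t-t^5))^2 \<le> 125* t^5"
proof -
  have t4: "t^4 \<le> 1/256"
  proof -
    have "t^4 \<le> (1/4)^4" by (rule power_mono) (use t in auto)
    then show ?thesis by (simp add: power_divide)
  qed
  have t5: "t^5 \<le> 1/1024"
  proof -
    have "t^5 \<le> (1/4)^5" by (rule power_mono) (use t in auto)
    then show ?thesis by (simp add: power_divide)
  qed
  define P where "P = 1-t-t^5"
  have P: "749/1000 \<le> P" unfolding P_def using t t5 by simp
  have p2: "p^2 \<le> 9.87"
  proof -
    have "p^2 \<le> 3.1416^2" by (rule power_mono) (use p in auto)
    then show ?thesis by (simp add: power_divide)
  qed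
  have p4: "p^4 \<le> 97.5"
  proof -
    have "p^4 \<le> 3.1416^4" by (rule power_mono) (use p in auto)
    then show ?thesis by (simp add: power_divide)
  qed
  have e1: "3/4* p^4* t^5 + 35/4* p^4* t^9 = (p^4 * (3/4 + 35/4* t^4)) * t^5"
    by (simp add: power_add[symmetric] algebra_simps)
  have "p^4 * (3/4 + 35/4* t^4) \<le> 97.5 * (3/4 + 35/4*(1/256))"
    using p4 t4 t by (intro mult_mono add_left_mono) (auto simp: zero_le_power)
  also have "\<dots> \<le> 77" by simp
  finally have b1: "p^4 * (3/4 + 35/4* t^4) \<le> 77" .
  have T1: "(3/4* p^4* t^5 + 35/4* p^4* t^9)/P \<le> 103 * t^5"
  proof -
    have "(3/4* p^4* t^5 + 35/4* p^4* t^9)/P \<le> (77* t^5)/(749/1000)"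
      unfolding e1 using b1 P t by (intro frac_le mult_right_mono) (auto simp: zero_le_power)
    also have "\<dots> \<le> 103 * t^5" using t by simp
    finally show ?thesis .
  qed
  have e2: "p^2/2* t^3 + 5* p^2/2* t^7 = (p^2 * (1/2 + 5/2* t^4)) * t^3"
    by (simp add: power_add[symmetric] algebra_simps)
  have "p^2 * (1/2 + 5/2* t^4) \<le> 9.87 * (1/2 + 5/2*(1/256))"
    using p2 t4 t by (intro mult_mono add_left_mono) (auto simp: zero_le_power)
  also have "\<dots> \<le> 5.04" by simp
  finally have b2: "p^2 * (1/2 + 5/2* t^4) \<le> 5.04" .
  have "(p^2/2* t^3 + 5* p^2/2* t^7)/P \<le> (5.04* t^3)/(749/1000)"
    unfolding e2 using b2 P t by (intro frac_le mult_right_mono) (auto simp: zero_le_power)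
  also have "\<dots> = 5040/749 * t^3" by simp
  finally have b3: "(p^2/2* t^3 + 5* p^2/2* t^7)/P \<le> 5040/749 * t^3" .
  have b3': "0 \<le> (p^2/2* t^3 + 5* p^2/2* t^7)/P" using P t by (auto simp: zero_le_power)
  have "((p^2/2* t^3 + 5* p^2/2* t^7)/P)^2 \<le> (5040/749 * t^3)^2"
    using power_mono[OF b3 b3'] .
  also have "\<dots> = (5040/749)^2 * t * t^5" by (simp add: power_numeral_reduce power2_eq_square field_simps)
  also have "\<dots> \<le> (5040/749)^2 * (1/4) * t^5"
    using t by (intro mult_right_mono mult_left_mono) auto
  also have "\<dots> \<le> 12 * t^5" using t by (intro mult_right_mono) (auto simp: power2_eq_square)
  finally have T2: "((p^2/2* t^3 + 5* p^2/2* t^7)/P)^2 \<le> 12 * t^5" .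
  have "0 \<le> t^5" using t by simp
  then show ?thesis using T1 T2 unfolding P_def by linarith
qed


lemma frac_gen:
  fixes x y z e :: real
  assumes "2 \<le> x" "2 \<le> y" "2 \<le> z" "e = 1 \<or> e = -1"
  shows "y^14*(x^5-x^4-e)*(z^5-z^4-e)/(x^7* z^7*(y^5-y^4+e)^2)
       = (y^4/(x^2* z^2)) * ((1-1/x-e*(1/x)^5)*(1-1/z-e*(1/z)^5)/(1-1/y+e*(1/y)^5)^2)"
proof -
  have x0: "x \<noteq> 0" and y0: "y \<noteq> 0" and z0: "z \<noteq> 0" using assms by auto
  have h0: "y^4 * 1 \<le> y^4 * (y - 1)" using assms by (intro mult_left_mono) auto
  have h1: "(2::real)^4 \<le> y^4" using assms by (intro power_mono) auto
  have h2: "y^5 - y^4 = y^4*(y-1)" by (simp add: algebra_simps power_numeral_reduce)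
  have yy: "y^5 - y^4 + e \<noteq> 0" using h0 h1 h2 assms(4) by auto
  have ex: "1-1/x-e*(1/x)^5 = (x^5-x^4-e)/x^5" using x0 by (simp add: field_simps power_numeral_reduce)
  have ez: "1-1/z-e*(1/z)^5 = (z^5-z^4-e)/z^5" using z0 by (simp add: field_simps power_numeral_reduce)
  have ey: "1-1/y+e*(1/y)^5 = (y^5-y^4+e)/y^5" using y0 by (simp add: field_simps power_numeral_reduce)
  show ?thesis unfolding ex ez ey using x0 y0 z0 yy
    by (simp add: field_simps power2_eq_square power_numeral_reduce)
qed

lemma mu_sq: "0 \<le> m \<Longrightarrow> (mu m)^2 = pi^2 * m"
  by (simp add: mu_def power_mult_distrib)

lemma A_eq: "0 < a \<Longrightarrow> (mu (a+1))^4/((mu a)^2*(mu (a+2))^2) = (a+1)^2/(a*(a+2))"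
proof -
  assume a: "0 < a"
  have "(mu (a+1))^4 = ((mu (a+1))^2)^2" by simp
  also have "\<dots> = (pi^2*(a+1))^2" using a by (simp add: mu_sq)
  finally have e1: "(mu (a+1))^4 = (pi^2*(a+1))^2" .
  have e2: "(mu a)^2 = pi^2* a" "(mu (a+2))^2 = pi^2*(a+2)" using a by (simp_all add: mu_sq)
  have e3: "(pi^2*(a+1))^2 = pi^4 * (a+1)^2" by (simp add: power_mult_distrib)
  have e4: "(pi^2*a) * (pi^2*(a+2)) = pi^4 * (a*(a+2))" by (simp add: power_mult_distrib algebra_simps)
  show ?thesis unfolding e1 e2 e3 e4 by (rule mult_divide_mult_cancel_left) simp
qed

theorem theorem3p2:
  fixes n :: nat
  assumes "n \<ge> 2"
  shows "g_fun (n + 1) < f_fun n + 1000 / (mu (real n - 1))^5"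
proof -
  define a where "a = real n - 1"
  have a1: "1 \<le> a" using assms by (simp add: a_def)
  have a0: "0 < a" using a1 by simp
  define x where "x = mu (real n - 1)"
  define y where "y = mu (real n)"
  define z where "z = mu (real n + 1)"
  define w where "w = mu (real n + 2)"
  have xa: "mu a = x" and ya: "mu (a+1) = y" and za: "mu (a+2) = z" and wa: "mu (a+3) = w"
    by (simp_all add: a_def x_def y_def z_def w_def) (simp_all add: algebra_simps)
  have f_eq: "f_fun n = exp (x - 2* y + z) * (y^14*(x^5-x^4-1)*(z^5-z^4-1)/(x^7* z^7*(y^5-y^4+1)^2))"
    unfolding f_fun_def Let_def x_def y_def z_def by simp
  have g_eq: "g_fun (n+1) = exp (y - 2* z + w) * (z^14*(y^5-y^4+1)*(w^5-w^4+1)/(y^7* w^7*(z^5-z^4-1)^2))"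
    unfolding g_fun_def Let_def y_def z_def w_def by (simp add: algebra_simps)
  have x3: "3 \<le> x" using mu_ge[of a] a1 xa by simp
  have y3: "3 \<le> y" using mu_ge[of "a+1"] a1 ya by simp
  have z3: "3 \<le> z" using mu_ge[of "a+2"] a1 za by simp
  have w3: "3 \<le> w" using mu_ge[of "a+3"] a1 wa by simp
  have xy: "x \<le> y" "y \<le> z" "z \<le> w" using mu_mono[of a "a+1"] mu_mono[of "a+1" "a+2"] mu_mono[of "a+2" "a+3"]
    a0 xa ya za wa by auto
  define t where "t = 1 / x"
  have t0: "0 < t" using x3 by (simp add: t_def)
  define P0 where "P0 = Gf a"
  define M1 where "M1 = Gf (a+1)"
  define P2 where "P2 = Gf (a+2)"
  define M3 where "M3 = Gf (a+3)"
  have P0e: "P0 = 1 - 1/x - (1/x)^5" unfolding P0_def using Gf_mu[of a] a0 xa by simp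
  have M1e: "M1 = 1 - 1/y - (1/y)^5" unfolding M1_def using Gf_mu[of "a+1"] a0 ya by simp
  have P2e: "P2 = 1 - 1/z - (1/z)^5" unfolding P2_def using Gf_mu[of "a+2"] a0 za by simp
  have M3e: "M3 = 1 - 1/w - (1/w)^5" unfolding M3_def using Gf_mu[of "a+3"] a0 wa by simp
  have Pmono: "P0 \<le> M1" "P0 \<le> P2" "P0 \<le> M3" "M1 \<le> P2"
    unfolding P0_def M1_def P2_def M3_def using mono_facts(1)[of a] mono_facts(1)[of "a+1" "a+2"] a0 by auto
  have Ppos: "0 < P0" "0 < M1" "0 < P2" "0 < M3"
    unfolding P0_def M1_def P2_def M3_def using Gf_pos a1 by auto
  define N1 where "N1 = M1 + 2*(1/y)^5"
  define N3 where "N3 = M3 + 2*(1/w)^5"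
  have N1e: "1 - 1/y + (1/y)^5 = N1" unfolding N1_def M1e by simp
  have N3e: "1 - 1/w + (1/w)^5 = N3" unfolding N3_def M3e by simp
  define Af where "Af = y^4/(x^2* z^2)"
  define Ag where "Ag = z^4/(y^2* w^2)"
  have Afe: "Af = (a+1)^2/(a*(a+2))" unfolding Af_def using A_eq[OF a0] xa ya za by simp
  have Age: "Ag = (a+2)^2/((a+1)*(a+3))" unfolding Ag_def using A_eq[of "a+1"] a0 ya za wa
    by (simp add: add.assoc)
  have f2: "f_fun n = exp (x - 2* y + z) * (Af * (P0* P2/N1^2))"
    unfolding f_eq Af_def P0e P2e N1e[symmetric]
    using frac_gen[of x y z 1] x3 y3 z3 by simp
  have g2: "g_fun (n+1) = exp (y - 2* z + w) * (Ag * (N1* N3/P2^2))"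
    unfolding g_eq Ag_def P2e N1e[symmetric] N3e[symmetric]
    using frac_gen[of y z w "-1"] y3 z3 w3 by simp
  have r5: "1000 / (mu (real n - 1))^5 = 1000 * t^5"
    unfolding t_def x_def[symmetric] by (simp add: power_divide)
  have dh: "\<And>m. a \<le> m \<Longrightarrow> ((\<lambda>m. pi * sqrt m) has_real_derivative h1 m) (at m)"
           "\<And>m. a \<le> m \<Longrightarrow> (h1 has_real_derivative h2 m) (at m)"
           "\<And>m. a \<le> m \<Longrightarrow> (h2 has_real_derivative h3 m) (at m)"
    using a0 dh1' dh2 dh3 by auto
  have mu_fun: "\<And>m. mu m = pi * sqrt m" by (simp add: mu_def)
  have xa': "pi * sqrt a = x" and ya': "pi * sqrt (a+1) = y" and za': "pi * sqrt (a+2) = z"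
    and wa': "pi * sqrt (a+3) = w" using xa ya za wa unfolding mu_fun by auto
  have ya'': "pi * sqrt (a+1+1) = z" and wa'': "pi * sqrt (a+1+2) = w"
    using za wa unfolding mu_fun by (simp_all add: add.assoc)
  obtain \<eta> where eta: "a < \<eta>" "pi * sqrt (a+2) - 2*(pi * sqrt (a+1)) + pi * sqrt a = h2 \<eta>"
    using diff2[of a "\<lambda>m. pi * sqrt m" h1 h2] dh by auto
  have "h2 \<eta> < 0" using eta(1) a0 unfolding h2_def by simp
  then have E1le: "x - 2*y + z \<le> 0" using eta(2) unfolding xa' ya' za' by simp
  obtain \<eta>2 where eta2: "a+1 < \<eta>2" "pi * sqrt (a+1+2) - 2*(pi * sqrt (a+1+1)) + pi * sqrt (a+1) = h2 \<eta>2"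
    using diff2[of "a+1" "\<lambda>m. pi * sqrt m" h1 h2] dh by auto
  have "h2 \<eta>2 < 0" using eta2(1) a0 unfolding h2_def by simp
  then have E2le: "y - 2*z + w \<le> 0" using eta2(2) unfolding ya' ya'' wa'' by simp
  obtain \<eta>3 where eta3: "a < \<eta>3"
     "pi * sqrt (a+3) - 3*(pi * sqrt (a+2)) + 3*(pi * sqrt (a+1)) - pi * sqrt a = h3 \<eta>3"
    using diff3[of a "\<lambda>m. pi * sqrt m" h1 h2 h3] dh by auto
  define d3 where "d3 = w - 3* z + 3* y - x"
  have d3e: "d3 = h3 \<eta>3" using eta3(2) unfolding d3_def xa' ya' za' wa' by simp
  have d3le: "d3 \<le> h3 a" using mono_facts(4)[of a \<eta>3] eta3 a0 d3e by simp
  have h3a: "h3 a = 3* pi/8 * (pi* t)^5" unfolding h3_def t_def using invpow_mu[OF a0, of 5] xa by simp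
  have expE: "exp (y - 2* z + w) = exp (x - 2* y + z) * exp d3"
    unfolding d3_def by (simp add: exp_add[symmetric] algebra_simps)
  define phi2 where "phi2 = (\<lambda>m. G2 m / Gf m - (G1 m / Gf m)^2)"
  have dphi: "\<And>m. a \<le> m \<Longrightarrow> ((\<lambda>m. ln (Gf m)) has_real_derivative G1 m / Gf m) (at m)"
             "\<And>m. a \<le> m \<Longrightarrow> ((\<lambda>m. G1 m / Gf m) has_real_derivative phi2 m) (at m)"
    using a1 dphi1 dphi2 unfolding phi2_def by auto
  have phi2_neg: "\<And>m. a \<le> m \<Longrightarrow> phi2 m \<le> 0"
  proof -
    fix m assume "a \<le> m"
    then have "G2 m < 0" "0 < Gf m" using G2_neg Gf_pos a1 by auto
    then have "G2 m / Gf m < 0" by (simp add: divide_neg_pos)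
    then show "phi2 m \<le> 0" unfolding phi2_def by (smt (verit) zero_le_power2)
  qed
  define C2 where "C2 = - G2 a / Gf a + (G1 a / Gf a)^2"
  have phi2_lb: "\<And>m. a \<le> m \<Longrightarrow> - C2 \<le> phi2 m"
  proof -
    fix m assume am: "a \<le> m"
    note mf = mono_facts[OF a0 am]
    have pa: "0 < Gf a" "0 < Gf m" using Gf_pos a1 am by auto
    have g1: "0 < G1 m" "0 < G2 m \<or> True" using G1_pos a0 am by auto
    have "- G2 m / Gf m \<le> - G2 a / Gf a"
      using mf pa G2_neg[of m] a0 am by (intro frac_le) auto
    moreover have "G1 m / Gf m \<le> G1 a / Gf a"
      using mf pa G1_pos[of m] a0 am by (intro frac_le) auto
    then have "(G1 m / Gf m)^2 \<le> (G1 a / Gf a)^2"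
      using pa G1_pos[of m] a0 am by (intro power_mono) auto
    ultimately show "- C2 \<le> phi2 m" unfolding C2_def phi2_def by (simp add: algebra_simps)
  qed
  obtain \<theta> where th: "a < \<theta>" "ln (Gf (a+2)) - 2 * ln (Gf (a+1)) + ln (Gf a) = phi2 \<theta>"
    using diff2[of a "\<lambda>m. ln (Gf m)" "\<lambda>m. G1 m / Gf m" phi2] dphi by auto
  obtain \<theta>2 where th2: "a+1 < \<theta>2" "ln (Gf (a+1+2)) - 2 * ln (Gf (a+1+1)) + ln (Gf (a+1)) = phi2 \<theta>2"
    using diff2[of "a+1" "\<lambda>m. ln (Gf m)" "\<lambda>m. G1 m / Gf m" phi2] dphi by auto
  have lnA: "ln P0 + ln P2 \<le> ln M1 + ln M1" "ln M1 + ln M1 \<le> ln P0 + ln P2 + C2"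
    "ln M1 + ln M3 \<le> ln P2 + ln P2"
    using th th2 phi2_neg[of \<theta>] phi2_lb[of \<theta>] phi2_neg[of \<theta>2]
    unfolding P0_def M1_def P2_def M3_def by (simp_all add: algebra_simps)
  have ex: "\<And>p q::real. 0 < p \<Longrightarrow> 0 < q \<Longrightarrow> exp (ln p + ln q) = p * q"
    by (simp add: exp_add)
  have ex2: "\<And>p::real. 0 < p \<Longrightarrow> p^2 = p * p" by (simp add: power2_eq_square)
  have cc1: "M1*M3 \<le> P2^2"
  proof -
    have "exp (ln M1 + ln M3) \<le> exp (ln P2 + ln P2)" using lnA(3) by simp
    then show ?thesis unfolding ex[OF Ppos(2) Ppos(4)] ex[OF Ppos(3) Ppos(3)] ex2[OF Ppos(3)] .
  qed
  have cc2: "P0*P2 \<le> M1^2"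
  proof -
    have "exp (ln P0 + ln P2) \<le> exp (ln M1 + ln M1)" using lnA(1) by simp
    then show ?thesis unfolding ex[OF Ppos(1) Ppos(3)] ex[OF Ppos(2) Ppos(2)] ex2[OF Ppos(2)] .
  qed
  have cc3: "M1^2 \<le> P0*P2*exp C2"
  proof -
    have "exp (ln M1 + ln M1) \<le> exp ((ln P0 + ln P2) + C2)" using lnA(2) by simp
    then show ?thesis unfolding exp_add[of "ln P0 + ln P2"] ex[OF Ppos(1) Ppos(3)] ex[OF Ppos(2) Ppos(2)] ex2[OF Ppos(2)] .
  qed
  have v: "0 \<le> 1/y" "1/y \<le> t" "0 \<le> 1/w" "1/w \<le> t"
    unfolding t_def using x3 y3 w3 xy by (auto simp: field_simps)
  have E1: "0 < exp (x - 2* y + z)" "exp (x - 2* y + z) \<le> 1" using E1le by auto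
  have Ag0: "0 < Ag" unfolding Age using a0 by simp
  have AgAf: "Ag \<le> Af"
  proof -
    have p1: "0 < (a+1)*(a+3)" "0 < a*(a+2)" using a0 by auto
    have "(a+2)^2/((a+1)*(a+3)) = 1 + 1/((a+1)*(a+3))" using p1 by (simp add: field_simps power2_eq_square)
    moreover have "(a+1)^2/(a*(a+2)) = 1 + 1/(a*(a+2))" using p1 by (simp add: field_simps power2_eq_square)
    moreover have "1/((a+1)*(a+3)) \<le> 1/(a*(a+2))"
    proof (rule frac_le)
      show "a*(a+2) \<le> (a+1)*(a+3)" using a0 by (simp add: algebra_simps)
    qed (use p1 in auto)
    ultimately show ?thesis unfolding Age Afe by simp
  qed
  have P0t: "P0 = 1 - t - t^5" unfolding P0e t_def by simp
  show ?thesis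
  proof (cases "a \<le> 3/2")
    case False
    then have a2: "2 \<le> a" by (simp add: a_def)
    have Af98: "Af \<le> 9/8"
    proof -
      have m: "2* a \<le> a* a" using a2 by (intro mult_right_mono) auto
      have e1: "(a+1)^2 = a*a + 2*a + 1" by (simp add: power2_eq_square algebra_simps)
      have e2: "9/8*(a*(a+2)) = 9/8*(a*a) + 9/4*a" by (simp add: algebra_simps)
      have h: "(a+1)^2 \<le> 9/8 * (a*(a+2))" unfolding e1 e2 using m a2 by linarith
      have p: "0 < a*(a+2)" using a0 by simp
      show ?thesis unfolding Afe using h by (subst pos_divide_le_eq[OF p]) (simp add: algebra_simps)
    qed
    have "4 \<le> x"
    proof -
      have s1: "sqrt 2 \<le> sqrt a" using a2 by simp
      have s2: "1.4 \<le> sqrt 2" by (rule real_le_rsqrt) (simp add: power2_eq_square)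
      have s: "1.4 \<le> sqrt a" using s1 s2 by linarith
      have "3 * 1.4 \<le> pi * sqrt a" by (rule mult_mono) (use s pi_gt3 in auto)
      then show ?thesis using xa by (simp add: mu_def)
    qed
    then have t4: "t \<le> 1/4" unfolding t_def by (simp add: field_simps)
    have pi_b: "3 < pi" "pi \<le> 3.1416" using pi_gt3 pi_approx by auto
    have d3b: "d3 \<le> 362* t^5"
    proof -
      have "h3 a = (3/8 * pi^6) * t^5" unfolding h3a by (simp add: power_mult_distrib algebra_simps power_numeral_reduce)
      moreover have "pi^6 \<le> 3.1416^6" using pi_b by (intro power_mono) auto
      moreover have "(3/8 * pi^6) * t^5 \<le> (3/8 * 3.1416^6) * t^5"
        using \<open>pi^6 \<le> 3.1416^6\<close> t0 by (intro mult_right_mono mult_left_mono) auto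
      ultimately have "h3 a \<le> (3/8 * 3.1416^6) * t^5" by linarith
      also have "\<dots> \<le> 362 * t^5" using t0 by (intro mult_right_mono) (auto simp: power_divide)
      finally show ?thesis using d3le by linarith
    qed
    have C2b: "C2 \<le> 125* t^5"
    proof -
      have iv: "\<And>k. 1 / sqrt a ^ k = (pi * t)^k" using invpow_mu[OF a0] unfolding t_def xa by simp
      have pin: "pi \<noteq> 0" by simp
      have "Gf a = 1 - t - t^5" using P0t P0_def by simp
      moreover have "- G2 a = 3/4* pi^4* t^5 + 35/4* pi^4* t^9"
        unfolding G2_def iv using pin by (simp add: power_mult_distrib field_simps power_numeral_reduce)
      moreover have "G1 a = pi^2/2* t^3 + 5* pi^2/2* t^7"
        unfolding G1_def iv using pin by (simp add: power_mult_distrib field_simps power_numeral_reduce)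
      ultimately have "C2 = (3/4* pi^4* t^5 + 35/4* pi^4* t^9)/(1-t-t^5) + ((pi^2/2* t^3 + 5* pi^2/2* t^7)/(1-t-t^5))^2"
        unfolding C2_def by (simp add: minus_divide_left)
      then show ?thesis using C2_bound[OF t0 t4 pi_b] by simp
    qed
    have main: "exp (x - 2* y + z) * exp d3 * Ag * ((M1 + 2*(1/y)^5)*(M3+2*(1/w)^5)/P2^2)
        < exp (x - 2* y + z)* Af*(P0* P2/(M1+2*(1/y)^5)^2) + 1000* t^5"
      by (rule final_scalar[OF t0 t4 E1 d3b C2b Ppos(1) Pmono(1,2,3) _ cc1 cc2 cc3 v Ag0 AgAf Af98])
        (use P0t in simp)
    show ?thesis unfolding f2 g2 r5 expE using main unfolding N1_def N3_def by (simp add: algebra_simps)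
  next
    case True
    then have aa: "a = 1" using a1 assms a_def by (simp add: a_def)
    have xpi: "x = pi" using xa aa by (simp add: mu_def)
    have Ag98: "Ag = 9/8" unfolding Age aa by simp
    have P0b: "P0 \<ge> 161/243"
    proof -
      have "1/x \<le> 1/3" using x3 by (simp add: field_simps)
      moreover have "(1/x)^5 \<le> (1/3)^5" using x3 by (intro power_mono) (auto simp: field_simps)
      ultimately show ?thesis unfolding P0e by (simp add: power_divide)
    qed
    have vb: "\<And>r::real. 3 \<le> r \<Longrightarrow> 0 \<le> 1/r \<and> 1/r \<le> 1 \<and> (1/r)^5 \<le> 1/r"
    proof -
      fix r :: real assume r: "3 \<le> r"
      have a: "0 \<le> 1/r" "1/r \<le> 1" using r by auto
      have "(1/r)^5 \<le> (1/r)^1" by (rule power_decreasing) (use a in auto)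
      then show "0 \<le> 1/r \<and> 1/r \<le> 1 \<and> (1/r)^5 \<le> 1/r" using a by simp
    qed
    have Nb: "0 \<le> N1" "N1 \<le> 1" "0 \<le> N3" "N3 \<le> 1"
    proof -
      have "0 \<le> (1/y)^5" "0 \<le> (1/w)^5" using y3 w3 by auto
      then show "0 \<le> N1" "N1 \<le> 1" "0 \<le> N3" "N3 \<le> 1"
        using vb[OF y3] vb[OF w3] N1e N3e by linarith+
    qed
    have "g_fun (n+1) \<le> 1 * (9/8 * (1/(161/243)^2))"
    proof -
      have "N1* N3/P2^2 \<le> 1/(161/243)^2"
      proof (rule frac_le)
        show "N1* N3 \<le> 1" using Nb by (metis mult_le_one)
        show "(161/243)^2 \<le> P2^2" using P0b Pmono by (intro power_mono) auto
      qed (use Nb in auto)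
      then have X: "Ag * (N1* N3/P2^2) \<le> 9/8 * (1/(161/243)^2)" unfolding Ag98 by simp
      have E: "exp (y - 2* z + w) \<le> 1" using E2le by simp
      have X0: "0 \<le> Ag * (N1*N3/P2^2)" using Nb Ppos Ag0 by simp
      show ?thesis unfolding g2 using mult_mono[OF E X zero_le_one X0] .
    qed
    also have "\<dots> < 1000 * t^5"
    proof -
      have "1/3.1416 \<le> t" unfolding t_def xpi using pi_approx pi_gt3 by (simp add: field_simps)
      then have "(1/3.1416)^5 \<le> t^5" by (intro power_mono) auto
      then show ?thesis by (simp add: power_divide)
    qed
    also have "\<dots> \<le> f_fun n + 1000 * t^5"
    proof -
      have "0 \<le> f_fun n" unfolding f2 using Ppos Ag0 AgAf by (auto simp: zero_le_mult_iff)
      then show ?thesis by simp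
    qed
    finally show ?thesis unfolding r5 .
  qed
qed

end
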